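(* Let $\mathcal E=\widetilde{\Omega^1_D}(\mathcal A)$ be the bimodule of one-forms of a spectral triple $(\mathcal A,\mathcal H,D)$ and suppose $\mathcal E$ satisfies Assumption III. Endow $\mathcal Z(\mathcal E)\otimes_{\mathcal Z(\mathcal A)}\mathcal A$ with the $\mathcal A$-bimodule structure $b(e\otimes a)c=e\otimes bac$ and $\mathcal A\otimes_{\mathcal Z(\mathcal A)}\mathcal Z(\mathcal E)$ with $b(a\otimes e)c=bac\otimes e$ ($a,b,c\in\mathcal A$, $e\in\mathcal Z(\mathcal E)$). Then there are isomorphisms of $\mathcal A$-$\mathcal A$-bimodules $$\mathcal E\cong\mathcal A\otimes_{\mathcal Z(\mathcal A)}\mathcal Z(\mathcal E)\cong\mathcal Z(\mathcal E)\otimes_{\mathcal Z(\mathcal A)}\mathcal A.$$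
   Context: $\mathcal E$ is the linear span in $B(\mathcal H)$ of $\{a[D,b]:a,b\in\mathcal A\}$, an $\mathcal A$-bimodule. $\mathcal Z(\mathcal E)=\{e:ea=ae\ \forall a\in\mathcal A\}$, $\mathcal Z(\mathcal A)$ the center of $\mathcal A$. Assumption III: $\mathcal Z(\mathcal E)$ is finitely generated and projective over $\mathcal Z(\mathcal A)$, and the map $u^{\mathcal E}:\mathcal Z(\mathcal E)\otimes_{\mathcal Z(\mathcal A)}\mathcal A\to\mathcal E$, $\sum_i e_i\otimes a_i\mapsto\sum_ie_ia_i$, is an isomorphism of vector spaces. *)

theory Defs
  imports Main "HOL-Library.Poly_Mapping"
begin

text \<open>The ambient algebra (containing the operators of A, D and the one-forms) is an
arbitrary ring 'r; the commutator [D,b] is D*b - b*D.\<close>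

definition commut :: "'r::ring \<Rightarrow> 'r \<Rightarrow> 'r" where
  "commut D b = D * b - b * D"

text \<open>A is a unital subring (the complex scalars are not modelled; since A is unital,
the complex linear span of a[D,b] coincides with the additive span).\<close>
definition unital_subring :: "'r::ring_1 set \<Rightarrow> bool" where
  "unital_subring A \<longleftrightarrow> 1 \<in> A \<and> 0 \<in> A \<and>
     (\<forall>x\<in>A. \<forall>y\<in>A. x + y \<in> A \<and> x - y \<in> A \<and> x * y \<in> A \<and> - x \<in> A)"

inductive_set one_forms :: "'r::ring set \<Rightarrow> 'r \<Rightarrow> 'r set" for A D where
  zero: "0 \<in> one_forms A D"
| step: "x \<in> one_forms A D \<Longrightarrow> a \<in> A \<Longrightarrow> b \<in> A \<Longrightarrow> x + a * commut D b \<in> one_forms A D"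

definition centre :: "'r::ring set \<Rightarrow> 'r set" where
  "centre A = {z \<in> A. \<forall>a\<in>A. z * a = a * z}"

definition centralizer_in :: "'r::ring set \<Rightarrow> 'r set \<Rightarrow> 'r set" where
  "centralizer_in A E = {e \<in> E. \<forall>a\<in>A. e * a = a * e}"

text \<open>M (right module over the commutative ring R by ring multiplication) is finitely
generated projective iff it is a direct summand of R^n, i.e. there are R-linear maps
s : M \<rightarrow> R^n and p : R^n \<rightarrow> M with p \<circ> s = id.\<close>
definition free_mod :: "'r::ring set \<Rightarrow> nat \<Rightarrow> (nat \<Rightarrow> 'r) set" where
  "free_mod R n = {v. (\<forall>i. v i \<in> R) \<and> (\<forall>i\<ge>n. v i = 0)}"

definition fg_projective :: "'r::ring set \<Rightarrow> 'r set \<Rightarrow> bool" where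
  "fg_projective R M \<longleftrightarrow> (\<exists>n s p.
      (\<forall>e\<in>M. s e \<in> free_mod R n) \<and> (\<forall>v\<in>free_mod R n. p v \<in> M) \<and>
      (\<forall>e\<in>M. \<forall>e'\<in>M. s (e + e') = (\<lambda>i. s e i + s e' i)) \<and>
      (\<forall>e\<in>M. \<forall>z\<in>R. s (e * z) = (\<lambda>i. s e i * z)) \<and>
      (\<forall>v\<in>free_mod R n. \<forall>w\<in>free_mod R n. p (\<lambda>i. v i + w i) = p v + p w) \<and>
      (\<forall>v\<in>free_mod R n. \<forall>z\<in>R. p (\<lambda>i. v i * z) = p v * z) \<and>
      (\<forall>e\<in>M. p (s e) = e))"

text \<open>Free abelian group on M \<times> N modulo the subgroup generated by the bilinearity and
balancing relations.\<close>

definition tensor_gens :: "'r::ring set \<Rightarrow> 'r set \<Rightarrow> 'r set \<Rightarrow> (('r \<times> 'r) \<Rightarrow>\<^sub>0 int) set" where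
  "tensor_gens M N R =
     {Poly_Mapping.single (m1 + m2, n) 1 - Poly_Mapping.single (m1, n) 1 - Poly_Mapping.single (m2, n) 1 | m1 m2 n. m1 \<in> M \<and> m2 \<in> M \<and> n \<in> N}
   \<union> {Poly_Mapping.single (m, n1 + n2) 1 - Poly_Mapping.single (m, n1) 1 - Poly_Mapping.single (m, n2) 1 | m n1 n2. m \<in> M \<and> n1 \<in> N \<and> n2 \<in> N}
   \<union> {Poly_Mapping.single (m * r, n) 1 - Poly_Mapping.single (m, r * n) 1 | m r n. m \<in> M \<and> r \<in> R \<and> n \<in> N}"

inductive_set tensor_rels :: "'r::ring set \<Rightarrow> 'r set \<Rightarrow> 'r set \<Rightarrow> (('r \<times> 'r) \<Rightarrow>\<^sub>0 int) set"
  for M N R where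
  zero: "0 \<in> tensor_rels M N R"
| add: "x \<in> tensor_rels M N R \<Longrightarrow> g \<in> tensor_gens M N R \<Longrightarrow> x + g \<in> tensor_rels M N R"
| sub: "x \<in> tensor_rels M N R \<Longrightarrow> g \<in> tensor_gens M N R \<Longrightarrow> x - g \<in> tensor_rels M N R"

definition formal_sums :: "'r set \<Rightarrow> 'r set \<Rightarrow> (('r \<times> 'r) \<Rightarrow>\<^sub>0 int) set" where
  "formal_sums M N = {f. Poly_Mapping.keys f \<subseteq> M \<times> N}"

definition tensor_eq :: "'r::ring set \<Rightarrow> 'r set \<Rightarrow> 'r set \<Rightarrow> ((('r \<times> 'r) \<Rightarrow>\<^sub>0 int) \<times> (('r \<times> 'r) \<Rightarrow>\<^sub>0 int)) set" where
  "tensor_eq M N R = {(f, g). f \<in> formal_sums M N \<and> g \<in> formal_sums M N \<and> f - g \<in> tensor_rels M N R}"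

definition tensor :: "'r::ring set \<Rightarrow> 'r set \<Rightarrow> 'r set \<Rightarrow> (('r \<times> 'r) \<Rightarrow>\<^sub>0 int) set set" where
  "tensor M N R = formal_sums M N // tensor_eq M N R"

definition tensor_class :: "'r::ring set \<Rightarrow> 'r set \<Rightarrow> 'r set \<Rightarrow> (('r \<times> 'r) \<Rightarrow>\<^sub>0 int) \<Rightarrow> (('r \<times> 'r) \<Rightarrow>\<^sub>0 int) set" where
  "tensor_class M N R f = tensor_eq M N R `` {f}"

definition tensor_plus :: "'r::ring set \<Rightarrow> 'r set \<Rightarrow> 'r set \<Rightarrow>
    (('r \<times> 'r) \<Rightarrow>\<^sub>0 int) set \<Rightarrow> (('r \<times> 'r) \<Rightarrow>\<^sub>0 int) set \<Rightarrow> (('r \<times> 'r) \<Rightarrow>\<^sub>0 int) set" where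
  "tensor_plus M N R X Y = tensor_class M N R ((SOME f. f \<in> X) + (SOME g. g \<in> Y))"

definition tensor_map :: "'r::ring set \<Rightarrow> 'r set \<Rightarrow> 'r set \<Rightarrow> ('r \<times> 'r \<Rightarrow> 'r \<times> 'r) \<Rightarrow>
    (('r \<times> 'r) \<Rightarrow>\<^sub>0 int) set \<Rightarrow> (('r \<times> 'r) \<Rightarrow>\<^sub>0 int) set" where
  "tensor_map M N R h X = tensor_class M N R (frag_extend (\<lambda>p. Poly_Mapping.single (h p) 1) (SOME f. f \<in> X))"

definition act_right_factor :: "'r::ring set \<Rightarrow> 'r set \<Rightarrow> 'r set \<Rightarrow> 'r \<Rightarrow> 'r \<Rightarrow>
    (('r \<times> 'r) \<Rightarrow>\<^sub>0 int) set \<Rightarrow> (('r \<times> 'r) \<Rightarrow>\<^sub>0 int) set" where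
  "act_right_factor M N R b c = tensor_map M N R (\<lambda>(e, a). (e, b * a * c))"

definition act_left_factor :: "'r::ring set \<Rightarrow> 'r set \<Rightarrow> 'r set \<Rightarrow> 'r \<Rightarrow> 'r \<Rightarrow>
    (('r \<times> 'r) \<Rightarrow>\<^sub>0 int) set \<Rightarrow> (('r \<times> 'r) \<Rightarrow>\<^sub>0 int) set" where
  "act_left_factor M N R b c = tensor_map M N R (\<lambda>(a, e). (b * a * c, e))"

definition mult_map :: "(('r::ring_1 \<times> 'r) \<Rightarrow>\<^sub>0 int) set \<Rightarrow> 'r" where
  "mult_map X = (let f = (SOME f. f \<in> X) in
                  (\<Sum>p\<in>Poly_Mapping.keys f. of_int (Poly_Mapping.lookup f p) * (fst p * snd p)))"

definition bimod_iso :: "'r set \<Rightarrow> 'x set \<Rightarrow> ('x \<Rightarrow> 'x \<Rightarrow> 'x) \<Rightarrow> ('r \<Rightarrow> 'r \<Rightarrow> 'x \<Rightarrow> 'x) \<Rightarrow>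
    'y set \<Rightarrow> ('y \<Rightarrow> 'y \<Rightarrow> 'y) \<Rightarrow> ('r \<Rightarrow> 'r \<Rightarrow> 'y \<Rightarrow> 'y) \<Rightarrow> ('x \<Rightarrow> 'y) \<Rightarrow> bool" where
  "bimod_iso A X plusX actX Y plusY actY \<phi> \<longleftrightarrow>
     bij_betw \<phi> X Y \<and>
     (\<forall>x\<in>X. \<forall>x'\<in>X. \<phi> (plusX x x') = plusY (\<phi> x) (\<phi> x')) \<and>
     (\<forall>b\<in>A. \<forall>c\<in>A. \<forall>x\<in>X. \<phi> (actX b c x) = actY b c (\<phi> x))"

end

theory Submission imports Defs begin

definition LLh :: "('a \<Rightarrow> 'r::ring_1) \<Rightarrow> ('a \<Rightarrow>\<^sub>0 int) \<Rightarrow> 'r" where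
  "LLh h f = (\<Sum>p\<in>Poly_Mapping.keys f. of_int (Poly_Mapping.lookup f p) * h p)"

lemma LLh_superset:
  assumes "finite S" "Poly_Mapping.keys f \<subseteq> S"
  shows "LLh h f = (\<Sum>p\<in>S. of_int (Poly_Mapping.lookup f p) * h p)"
  unfolding LLh_def using assms
  by (intro sum.mono_neutral_left) (auto simp: in_keys_iff)

lemma LLh_add: "LLh h (f + g) = LLh h f + LLh h g"
proof -
  let ?S = "Poly_Mapping.keys f \<union> Poly_Mapping.keys g"
  have fin: "finite ?S" by simp
  have k: "Poly_Mapping.keys (f+g) \<subseteq> ?S" by (rule keys_add)
  show ?thesis
    using LLh_superset[OF fin k, of h] LLh_superset[OF fin, of f h] LLh_superset[OF fin, of g h]
    by (simp add: lookup_add distrib_right sum.distrib)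
qed

lemma LLh_0[simp]: "LLh h 0 = 0" by (simp add: LLh_def)

lemma LLh_diff: "LLh h (f - g) = LLh h f - LLh h g"
  using LLh_add[of h "f - g" g] by (simp add: algebra_simps)

lemma LLh_single[simp]: "LLh h (frag_of p) = h p"
  by (simp add: LLh_def keys_frag_of)

lemma LLh_extend:
  "LLh h (frag_extend (\<lambda>p. frag_of (k p)) f) = LLh (h \<circ> k) f"
  using subset_UNIV
  by (induction f rule: frag_induction) (auto simp: frag_extend_diff LLh_diff)

abbreviation "mm \<equiv> (\<lambda>p. fst p * snd p)"

lemma mult_map_eq: "mult_map X = LLh mm (SOME f. f \<in> X)"
  by (simp add: mult_map_def LLh_def Let_def)

lemma LL_gen: "g \<in> tensor_gens M N R \<Longrightarrow> LLh mm g = (0::'r::ring_1)"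
  unfolding tensor_gens_def
  by (auto simp: LLh_diff distrib_left distrib_right mult.assoc)

lemma LL_rels: "x \<in> tensor_rels M N R \<Longrightarrow> LLh mm x = (0::'r::ring_1)"
  by (induction rule: tensor_rels.induct) (auto simp: LLh_add LLh_diff LL_gen)

lemma rels_add: "y \<in> tensor_rels M N R \<Longrightarrow> x \<in> tensor_rels M N R \<Longrightarrow> x + y \<in> tensor_rels M N R"
proof (induction y rule: tensor_rels.induct)
  case zero then show ?case by simp
next
  case (add y g)
  have "x + y \<in> tensor_rels M N R" using add.IH add.prems by blast
  from tensor_rels.add[OF this add.hyps(2)] have "x + y + g \<in> tensor_rels M N R" .
  then show ?case by (simp only: add.assoc)
next
  case (sub y g)
  have "x + y \<in> tensor_rels M N R" using sub.IH sub.prems by blast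
  from tensor_rels.sub[OF this sub.hyps(2)] have "x + y - g \<in> tensor_rels M N R" .
  then show ?case by (simp only: add_diff_eq)
qed

lemma rels_neg: "x \<in> tensor_rels M N R \<Longrightarrow> - x \<in> tensor_rels M N R"
proof (induction x rule: tensor_rels.induct)
  case zero then show ?case using tensor_rels.zero by simp
next
  case (add y g)
  from tensor_rels.sub[OF add.IH add.hyps(2)] have "- y - g \<in> tensor_rels M N R" .
  moreover have "- (y + g) = - y - g" by (simp add: algebra_simps)
  ultimately show ?case by simp
next
  case (sub y g)
  from tensor_rels.add[OF sub.IH sub.hyps(2)] have "- y + g \<in> tensor_rels M N R" .
  moreover have "- (y - g) = - y + g" by (simp add: algebra_simps)
  ultimately show ?case by simp
qed

lemma rels_diff: "x \<in> tensor_rels M N R \<Longrightarrow> y \<in> tensor_rels M N R \<Longrightarrow> x - y \<in> tensor_rels M N R"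
proof -
  assume "x \<in> tensor_rels M N R" "y \<in> tensor_rels M N R"
  then have "x + - y \<in> tensor_rels M N R" using rels_add rels_neg by blast
  then show ?thesis by (simp only: diff_conv_add_uminus)
qed

lemma gen_in_rels: "g \<in> tensor_gens M N R \<Longrightarrow> g \<in> tensor_rels M N R"
  using tensor_rels.add[OF tensor_rels.zero] by fastforce

lemma neg_gen_in_rels: "g \<in> tensor_gens M N R \<Longrightarrow> - g \<in> tensor_rels M N R"
  using tensor_rels.sub[OF tensor_rels.zero] by fastforce

lemma self_in_class: "f \<in> formal_sums M N \<Longrightarrow> f \<in> tensor_class M N R f"
  by (simp add: tensor_class_def tensor_eq_def tensor_rels.zero)

lemma class_in: "f \<in> formal_sums M N \<Longrightarrow> tensor_class M N R f \<in> tensor M N R"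
  unfolding tensor_def tensor_class_def by (rule quotientI)

lemma class_mem_LL:
  assumes "g \<in> tensor_class M N R f"
  shows "LLh mm g = (LLh mm f :: 'r::ring_1)"
proof -
  from assms have "f - g \<in> tensor_rels M N R" by (simp add: tensor_class_def tensor_eq_def)
  then have "LLh mm (f - g) = (0::'r)" by (rule LL_rels)
  then show ?thesis by (simp add: LLh_diff)
qed

lemma class_LL:
  assumes "f \<in> formal_sums M N"
  shows "mult_map (tensor_class M N R f) = (LLh mm f :: 'r::ring_1)"
  unfolding mult_map_eq
  by (rule class_mem_LL, rule someI, rule self_in_class[OF assms])

lemma quot_class:
  assumes X: "X \<in> tensor M N R" and g: "g \<in> X"
  shows "X = tensor_class M N R g" "g \<in> formal_sums M N"
proof -
  obtain x where x: "x \<in> formal_sums M N" "X = tensor_eq M N R `` {x}"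
    using X unfolding tensor_def by (auto elim: quotientE)
  have xg: "x - g \<in> tensor_rels M N R" "g \<in> formal_sums M N"
    using g x by (auto simp: tensor_eq_def)
  then show "g \<in> formal_sums M N" by simp
  show "X = tensor_class M N R g"
  proof (intro set_eqI iffI)
    fix h assume "h \<in> X"
    then have "x - h \<in> tensor_rels M N R" "h \<in> formal_sums M N" using x by (auto simp: tensor_eq_def)
    then have "(x - h) - (x - g) \<in> tensor_rels M N R" using rels_diff xg by blast
    moreover have "(x - h) - (x - g) = g - h" by simp
    ultimately show "h \<in> tensor_class M N R g" using xg \<open>h \<in> formal_sums M N\<close>
      by (auto simp: tensor_class_def tensor_eq_def)
  next
    fix h assume "h \<in> tensor_class M N R g"
    then have "g - h \<in> tensor_rels M N R" "h \<in> formal_sums M N" by (auto simp: tensor_class_def tensor_eq_def)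
    then have "(x - g) + (g - h) \<in> tensor_rels M N R" using rels_add xg by blast
    then show "h \<in> X" using x \<open>h \<in> formal_sums M N\<close> by (auto simp: tensor_eq_def)
  qed
qed

lemma quot_some:
  assumes X: "X \<in> tensor M N R"
  shows "(SOME f. f \<in> X) \<in> X"
proof -
  obtain x where x: "x \<in> formal_sums M N" "X = tensor_eq M N R `` {x}"
    using X unfolding tensor_def by (auto elim: quotientE)
  then have "x \<in> X" using self_in_class[OF x(1)] by (simp add: tensor_class_def)
  then show ?thesis by (rule someI)
qed

lemma formal_sums_extend:
  assumes "f \<in> formal_sums M N" "\<forall>p\<in>M\<times>N. k p \<in> M'\<times>N'"
  shows "frag_extend (\<lambda>p. frag_of (k p)) f \<in> formal_sums M' N'"
proof -
  have "Poly_Mapping.keys (frag_extend (\<lambda>p. frag_of (k p)) f) \<subseteq> k ` Poly_Mapping.keys f"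
    using keys_frag_extend[of "\<lambda>p. frag_of (k p)" f] by (auto simp: keys_frag_of)
  moreover have "k ` Poly_Mapping.keys f \<subseteq> M' \<times> N'"
    using assms unfolding formal_sums_def by blast
  ultimately show ?thesis unfolding formal_sums_def by blast
qed

lemma generic_iso:
  fixes E :: "'r::ring_1 set"
  assumes bij: "bij_betw mult_map (tensor M N R) E"
    and closed: "\<forall>b\<in>A. \<forall>c\<in>A. \<forall>p\<in>M\<times>N. k b c p \<in> M\<times>N"
    and act: "\<forall>b\<in>A. \<forall>c\<in>A. \<forall>f\<in>formal_sums M N. LLh (mm \<circ> k b c) f = b * LLh mm f * c"
  shows "\<exists>\<psi>. bimod_iso A E (+) (\<lambda>b c x. b*x*c) (tensor M N R) (tensor_plus M N R)
            (\<lambda>b c. tensor_map M N R (k b c)) \<psi>"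
proof -
  let ?T = "tensor M N R"
  define \<psi> where "\<psi> = inv_into ?T mult_map"
  have inj: "inj_on mult_map ?T" and img: "mult_map ` ?T = E" using bij by (auto simp: bij_betw_def)
  have psi: "\<psi> x \<in> ?T" "mult_map (\<psi> x) = x" if "x \<in> E" for x
    using that img unfolding \<psi>_def by (auto intro: inv_into_into f_inv_into_f)
  have bk: "\<psi> (mult_map Z) = Z" if "Z \<in> ?T" for Z
    unfolding \<psi>_def using inj that by (rule inv_into_f_f)
  have fs: "(SOME f. f \<in> X) \<in> formal_sums M N" if "X \<in> ?T" for X
    using quot_class(2)[OF that quot_some[OF that]] .
  show ?thesis
  proof (intro exI[of _ \<psi>], unfold bimod_iso_def, intro conjI ballI)
    show "bij_betw \<psi> E ?T" unfolding \<psi>_def using bij by (rule bij_betw_inv_into)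
  next
    fix x x' assume xE: "x \<in> E" and x'E: "x' \<in> E"
    let ?f = "SOME f. f \<in> \<psi> x" and ?g = "SOME f. f \<in> \<psi> x'"
    have f: "?f \<in> formal_sums M N" by (rule fs[OF psi(1)[OF xE]])
    have g: "?g \<in> formal_sums M N" by (rule fs[OF psi(1)[OF x'E]])
    have fg: "?f + ?g \<in> formal_sums M N" using f g keys_add[of ?f ?g] by (auto simp: formal_sums_def)
    have Z: "tensor_plus M N R (\<psi> x) (\<psi> x') \<in> ?T"
      unfolding tensor_plus_def by (rule class_in[OF fg])
    have "mult_map (tensor_plus M N R (\<psi> x) (\<psi> x')) = LLh mm ?f + LLh mm ?g"
      unfolding tensor_plus_def using class_LL[OF fg] by (simp add: LLh_add)
    also have "\<dots> = x + x'" using psi(2)[OF xE] psi(2)[OF x'E] by (simp add: mult_map_eq)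
    finally show "\<psi> (x + x') = tensor_plus M N R (\<psi> x) (\<psi> x')"
      using bk[OF Z] by (simp only:)
  next
    fix b c x assume b: "b \<in> A" and c: "c \<in> A" and xE: "x \<in> E"
    let ?f = "SOME f. f \<in> \<psi> x"
    have f: "?f \<in> formal_sums M N" by (rule fs[OF psi(1)[OF xE]])
    have ff: "frag_extend (\<lambda>p. frag_of (k b c p)) ?f \<in> formal_sums M N"
      by (rule formal_sums_extend[OF f]) (use closed b c in blast)
    have Z: "tensor_map M N R (k b c) (\<psi> x) \<in> ?T"
      unfolding tensor_map_def by (rule class_in[OF ff])
    have "mult_map (tensor_map M N R (k b c) (\<psi> x)) = LLh (mm \<circ> k b c) ?f"
      unfolding tensor_map_def using class_LL[OF ff] by (simp add: LLh_extend)
    also have "\<dots> = b * LLh mm ?f * c" by (rule act[rule_format, OF b c f])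
    also have "\<dots> = b * x * c" using psi(2)[OF xE] by (simp add: mult_map_eq)
    finally show "\<psi> (b * x * c) = tensor_map M N R (k b c) (\<psi> x)"
      using bk[OF Z] by (simp only:)
  qed
qed


definition sw :: "(('r \<times> 'r) \<Rightarrow>\<^sub>0 int) \<Rightarrow> (('r \<times> 'r) \<Rightarrow>\<^sub>0 int)" where
  "sw f = frag_extend (\<lambda>p. frag_of (prod.swap p)) f"

lemma sw_sw: "sw (sw f) = f"
proof -
  have "sw (sw f) = frag_extend (frag_of \<circ> prod.swap) (frag_extend (frag_of \<circ> prod.swap) f)"
    by (simp add: sw_def comp_def)
  also have "\<dots> = frag_extend (frag_of \<circ> prod.swap \<circ> prod.swap) f"
    by (rule frag_extend_compose)
  also have "\<dots> = frag_extend frag_of f" by (simp add: comp_def)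
  also have "\<dots> = f" by (rule frag_expansion[symmetric])
  finally show ?thesis .
qed

lemma sw_diff: "sw (f - g) = sw f - sw g"
  by (simp add: sw_def frag_extend_diff)

lemma sw_add: "sw (f + g) = sw f + sw g"
  by (simp add: sw_def frag_extend_add)

lemma sw_fs: "f \<in> formal_sums M N \<Longrightarrow> sw f \<in> formal_sums N M"
  unfolding sw_def by (rule formal_sums_extend) auto

lemma sw_gen:
  fixes M N R :: "'r::ring_1 set"
  assumes cM: "\<forall>m\<in>M. \<forall>r\<in>R. m*r = r*m" and cN: "\<forall>m\<in>N. \<forall>r\<in>R. m*r = r*m"
    and g: "g \<in> tensor_gens M N R"
  shows "sw g \<in> tensor_rels N M R"
proof -
  have s1: "sw (frag_of p) = frag_of (prod.swap p)" for p by (simp add: sw_def)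
  from g consider
      (a) m1 m2 n where "g = frag_of (m1 + m2, n) - frag_of (m1, n) - frag_of (m2, n)" "m1 \<in> M" "m2 \<in> M" "n \<in> N"
    | (b) m n1 n2 where "g = frag_of (m, n1 + n2) - frag_of (m, n1) - frag_of (m, n2)" "m \<in> M" "n1 \<in> N" "n2 \<in> N"
    | (c) m r n where "g = frag_of (m * r, n) - frag_of (m, r * n)" "m \<in> M" "r \<in> R" "n \<in> N"
    unfolding tensor_gens_def by blast
  then show ?thesis
  proof cases
    case a
    then have "sw g \<in> tensor_gens N M R" by (simp add: sw_diff s1 tensor_gens_def) blast
    then show ?thesis by (rule gen_in_rels)
  next
    case b
    then have "sw g \<in> tensor_gens N M R" by (simp add: sw_diff s1 tensor_gens_def) blast
    then show ?thesis by (rule gen_in_rels)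
  next
    case c
    have e1: "m * r = r * m" using cM c by blast
    have e2: "r * n = n * r" using cN c by metis
    have "frag_of (n * r, m) - frag_of (n, r * m) \<in> tensor_gens N M R"
      using c unfolding tensor_gens_def by blast
    then have "- (frag_of (n * r, m) - frag_of (n, r * m)) \<in> tensor_rels N M R" by (rule neg_gen_in_rels)
    moreover have "sw g = - (frag_of (n * r, m) - frag_of (n, r * m))"
      using c(1) e1 e2 by (simp add: sw_diff s1)
    ultimately show ?thesis by simp
  qed
qed

lemma sw_rels:
  fixes M N R :: "'r::ring_1 set"
  assumes cM: "\<forall>m\<in>M. \<forall>r\<in>R. m*r = r*m" and cN: "\<forall>m\<in>N. \<forall>r\<in>R. m*r = r*m"
  shows "x \<in> tensor_rels M N R \<Longrightarrow> sw x \<in> tensor_rels N M R"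
proof (induction x rule: tensor_rels.induct)
  case zero then show ?case by (simp add: sw_def tensor_rels.zero)
next
  case (add x g)
  have "sw x + sw g \<in> tensor_rels N M R"
    by (rule rels_add[OF sw_gen[OF cM cN add.hyps(2)] add.IH])
  then show ?case by (simp only: sw_add)
next
  case (sub x g)
  have "sw x - sw g \<in> tensor_rels N M R"
    by (rule rels_diff[OF sub.IH sw_gen[OF cM cN sub.hyps(2)]])
  then show ?case by (simp only: sw_diff)
qed

lemma LL_sw:
  assumes "f \<in> formal_sums M N" "\<forall>m\<in>M. \<forall>n\<in>N. m*n = n*(m::'r::ring_1)"
  shows "LLh mm (sw f) = LLh mm f"
proof -
  have "LLh mm (sw f) = LLh (mm \<circ> prod.swap) f" unfolding sw_def by (rule LLh_extend)
  also have "\<dots> = LLh mm f" unfolding LLh_def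
  proof (rule sum.cong)
    fix p assume "p \<in> Poly_Mapping.keys f"
    then have "fst p \<in> M" "snd p \<in> N" using assms(1) by (auto simp: formal_sums_def)
    then have "fst p * snd p = snd p * fst p" using assms(2) by blast
    then show "of_int (Poly_Mapping.lookup f p) * (mm \<circ> prod.swap) p = of_int (Poly_Mapping.lookup f p) * mm p"
      by (simp add: prod.swap_def)
  qed simp
  finally show ?thesis .
qed

lemma bij_swap:
  fixes E :: "'r::ring_1 set"
  assumes bij: "bij_betw mult_map (tensor M N R) E"
    and cM: "\<forall>m\<in>M. \<forall>r\<in>R. m*r = r*m" and cN: "\<forall>m\<in>N. \<forall>r\<in>R. m*r = r*m"
    and cMN: "\<forall>m\<in>M. \<forall>n\<in>N. m*n = n*m"
  shows "bij_betw mult_map (tensor N M R) E"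
proof -
  have cNM: "\<forall>m\<in>N. \<forall>n\<in>M. m*n = n*m" using cMN by metis
  have inj: "inj_on mult_map (tensor M N R)" and img: "mult_map ` tensor M N R = E"
    using bij by (auto simp: bij_betw_def)
  have key: "mult_map (tensor_class M N R (sw f)) = mult_map X"
    if X: "X \<in> tensor N M R" and f: "f = (SOME f. f \<in> X)" for X f
  proof -
    have fX: "f \<in> X" using quot_some[OF X] f by simp
    have ff: "f \<in> formal_sums N M" by (rule quot_class(2)[OF X fX])
    have "mult_map (tensor_class M N R (sw f)) = LLh mm (sw f)" by (rule class_LL[OF sw_fs[OF ff]])
    also have "\<dots> = LLh mm f" by (rule LL_sw[OF ff cNM])
    also have "\<dots> = mult_map X" by (simp add: mult_map_eq f)
    finally show ?thesis .
  qed
  show ?thesis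
    unfolding bij_betw_def
  proof (intro conjI)
    show "inj_on mult_map (tensor N M R)"
    proof (rule inj_onI)
      fix X Y assume X: "X \<in> tensor N M R" and Y: "Y \<in> tensor N M R" and eq: "mult_map X = mult_map Y"
      define f where "f = (SOME f. f \<in> X)"
      define g where "g = (SOME f. f \<in> Y)"
      have fX: "f \<in> X" using quot_some[OF X] f_def by simp
      have gY: "g \<in> Y" using quot_some[OF Y] g_def by simp
      have ff: "f \<in> formal_sums N M" by (rule quot_class(2)[OF X fX])
      have gg: "g \<in> formal_sums N M" by (rule quot_class(2)[OF Y gY])
      have U: "tensor_class M N R (sw f) \<in> tensor M N R" by (rule class_in[OF sw_fs[OF ff]])
      have V: "tensor_class M N R (sw g) \<in> tensor M N R" by (rule class_in[OF sw_fs[OF gg]])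
      have "tensor_class M N R (sw f) = tensor_class M N R (sw g)"
      proof (rule inj_onD[OF inj _ U V])
        show "mult_map (tensor_class M N R (sw f)) = mult_map (tensor_class M N R (sw g))"
          using key[OF X f_def] key[OF Y g_def] eq by simp
      qed
      then have "sw g \<in> tensor_class M N R (sw f)" using self_in_class[OF sw_fs[OF gg]] by simp
      then have "sw f - sw g \<in> tensor_rels M N R" by (simp add: tensor_class_def tensor_eq_def)
      then have "sw (sw f - sw g) \<in> tensor_rels N M R" by (rule sw_rels[OF cM cN])
      then have "f - g \<in> tensor_rels N M R" by (simp add: sw_diff sw_sw)
      then have "g \<in> tensor_class N M R f" using ff gg by (simp add: tensor_class_def tensor_eq_def)
      then have "g \<in> X" using quot_class(1)[OF X fX] by simp
      then show "X = Y" using quot_class(1)[OF X] quot_class(1)[OF Y gY] by metis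
    qed
  next
    show "mult_map ` tensor N M R = E"
    proof (intro set_eqI iffI)
      fix x assume "x \<in> mult_map ` tensor N M R"
      then obtain X where X: "X \<in> tensor N M R" and x: "x = mult_map X" by blast
      define f where "f = (SOME f. f \<in> X)"
      have fX: "f \<in> X" using quot_some[OF X] f_def by simp
      have ff: "f \<in> formal_sums N M" by (rule quot_class(2)[OF X fX])
      have U: "tensor_class M N R (sw f) \<in> tensor M N R" by (rule class_in[OF sw_fs[OF ff]])
      have "mult_map (tensor_class M N R (sw f)) \<in> E" using imageI[OF U, of mult_map] img by simp
      then show "x \<in> E" using key[OF X f_def] x by simp
    next
      fix x assume "x \<in> E"
      then obtain X where X: "X \<in> tensor M N R" and x: "x = mult_map X" using img by force
      define f where "f = (SOME f. f \<in> X)"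
      have fX: "f \<in> X" using quot_some[OF X] f_def by simp
      have ff: "f \<in> formal_sums M N" by (rule quot_class(2)[OF X fX])
      have W: "tensor_class N M R (sw f) \<in> tensor N M R" by (rule class_in[OF sw_fs[OF ff]])
      have "mult_map (tensor_class N M R (sw f)) = LLh mm (sw f)" by (rule class_LL[OF sw_fs[OF ff]])
      also have "\<dots> = LLh mm f" by (rule LL_sw[OF ff cMN])
      also have "\<dots> = x" by (simp add: mult_map_eq f_def x)
      finally show "x \<in> mult_map ` tensor N M R" using W by force
    qed
  qed
qed


lemma term_right:
  fixes b e a c :: "'r::ring_1"
  assumes "b * e = e * b"
  shows "of_int l * (e * (b * a * c)) = b * (of_int l * (e * a)) * c"
proof -
  have "b * (of_int l * (e * a)) * c = (b * of_int l) * (e * a) * c" by (simp add: mult.assoc)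
  also have "\<dots> = of_int l * ((b * e) * a * c)" by (simp add: mult_of_int_commute mult.assoc)
  also have "\<dots> = of_int l * (e * (b * a * c))" using assms by (simp add: mult.assoc)
  finally show ?thesis by simp
qed

lemma term_left:
  fixes b e a c :: "'r::ring_1"
  assumes "e * c = c * e"
  shows "of_int l * ((b * a * c) * e) = b * (of_int l * (a * e)) * c"
proof -
  have "b * (of_int l * (a * e)) * c = (b * of_int l) * (a * (e * c))" by (simp add: mult.assoc)
  also have "\<dots> = of_int l * (b * a * c * e)" using assms by (simp add: mult_of_int_commute mult.assoc)
  finally show ?thesis by simp
qed

theorem proposition4p13:
  fixes A :: "'r::ring_1 set" and D :: 'r
  assumes "unital_subring A"
    and "fg_projective (centre A) (centralizer_in A (one_forms A D))"
    and "bij_betw mult_map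
           (tensor (centralizer_in A (one_forms A D)) A (centre A)) (one_forms A D)"
  shows "(\<exists>\<phi>. bimod_iso A (one_forms A D) (+) (\<lambda>b c x. b * x * c)
            (tensor A (centralizer_in A (one_forms A D)) (centre A))
            (tensor_plus A (centralizer_in A (one_forms A D)) (centre A))
            (act_left_factor A (centralizer_in A (one_forms A D)) (centre A)) \<phi>)
       \<and> (\<exists>\<psi>. bimod_iso A (one_forms A D) (+) (\<lambda>b c x. b * x * c)
            (tensor (centralizer_in A (one_forms A D)) A (centre A))
            (tensor_plus (centralizer_in A (one_forms A D)) A (centre A))
            (act_right_factor (centralizer_in A (one_forms A D)) A (centre A)) \<psi>)"
proof -
  let ?E = "one_forms A D" and ?Z = "centre A"
  let ?ZE = "centralizer_in A ?E"
  have mulA: "x * y \<in> A" if "x \<in> A" "y \<in> A" for x y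
    using assms(1) that unfolding unital_subring_def by blast
  have ZEc: "e * a = a * e" if "e \<in> ?ZE" "a \<in> A" for e a
    using that unfolding centralizer_in_def by blast
  have Zc: "z * a = a * z" if "z \<in> ?Z" "a \<in> A" for z a
    using that unfolding centre_def by blast
  have ZA: "?Z \<subseteq> A" unfolding centre_def by blast
  have cZE: "\<forall>m\<in>?ZE. \<forall>r\<in>?Z. m*r = r*m" using ZEc ZA by blast
  have cA: "\<forall>m\<in>A. \<forall>r\<in>?Z. m*r = r*m" using Zc by metis
  have cMN: "\<forall>m\<in>?ZE. \<forall>n\<in>A. m*n = n*m" using ZEc by blast
  have bij2: "bij_betw mult_map (tensor A ?ZE ?Z) ?E"
    by (rule bij_swap[OF assms(3) cZE cA cMN])
  have R: "act_right_factor ?ZE A ?Z = (\<lambda>b c. tensor_map ?ZE A ?Z ((\<lambda>b c (e, a). (e, b * a * c)) b c))"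
    by (simp add: act_right_factor_def fun_eq_iff)
  have L: "act_left_factor A ?ZE ?Z = (\<lambda>b c. tensor_map A ?ZE ?Z ((\<lambda>b c (a, e). (b * a * c, e)) b c))"
    by (simp add: act_left_factor_def fun_eq_iff)
  have first: "\<exists>\<phi>. bimod_iso A ?E (+) (\<lambda>b c x. b * x * c) (tensor A ?ZE ?Z) (tensor_plus A ?ZE ?Z)
       (\<lambda>b c. tensor_map A ?ZE ?Z ((\<lambda>b c (a, e). (b * a * c, e)) b c)) \<phi>"
  proof (rule generic_iso[OF bij2])
    show "\<forall>b\<in>A. \<forall>c\<in>A. \<forall>p\<in>A \<times> ?ZE. (\<lambda>b c (a, e). (b * a * c, e)) b c p \<in> A \<times> ?ZE"
      using mulA by auto
    show "\<forall>b\<in>A. \<forall>c\<in>A. \<forall>f\<in>formal_sums A ?ZE.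
       LLh (mm \<circ> (\<lambda>b c (a, e). (b * a * c, e)) b c) f = b * LLh mm f * c"
    proof (intro ballI)
      fix b c f assume b: "b \<in> A" and c: "c \<in> A" and f: "f \<in> formal_sums A ?ZE"
      show "LLh (mm \<circ> (\<lambda>b c (a, e). (b * a * c, e)) b c) f = b * LLh mm f * c"
        unfolding LLh_def sum_distrib_left sum_distrib_right
      proof (rule sum.cong)
        fix p assume "p \<in> Poly_Mapping.keys f"
        then obtain a e where p: "p = (a, e)" "a \<in> A" "e \<in> ?ZE" using f by (auto simp: formal_sums_def)
        have "e * c = c * e" using ZEc[OF p(3) c] .
        then show "of_int (Poly_Mapping.lookup f p) * (mm \<circ> (\<lambda>b c (a, e). (b * a * c, e)) b c) p
             = b * (of_int (Poly_Mapping.lookup f p) * mm p) * c"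
          using term_left by (simp add: p(1))
      qed simp
    qed
  qed
  have second: "\<exists>\<psi>. bimod_iso A ?E (+) (\<lambda>b c x. b * x * c) (tensor ?ZE A ?Z) (tensor_plus ?ZE A ?Z)
       (\<lambda>b c. tensor_map ?ZE A ?Z ((\<lambda>b c (e, a). (e, b * a * c)) b c)) \<psi>"
  proof (rule generic_iso[OF assms(3)])
    show "\<forall>b\<in>A. \<forall>c\<in>A. \<forall>p\<in>?ZE \<times> A. (\<lambda>b c (e, a). (e, b * a * c)) b c p \<in> ?ZE \<times> A"
      using mulA by auto
    show "\<forall>b\<in>A. \<forall>c\<in>A. \<forall>f\<in>formal_sums ?ZE A.
       LLh (mm \<circ> (\<lambda>b c (e, a). (e, b * a * c)) b c) f = b * LLh mm f * c"
    proof (intro ballI)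
      fix b c f assume b: "b \<in> A" and c: "c \<in> A" and f: "f \<in> formal_sums ?ZE A"
      show "LLh (mm \<circ> (\<lambda>b c (e, a). (e, b * a * c)) b c) f = b * LLh mm f * c"
        unfolding LLh_def sum_distrib_left sum_distrib_right
      proof (rule sum.cong)
        fix p assume "p \<in> Poly_Mapping.keys f"
        then obtain a e where p: "p = (e, a)" "a \<in> A" "e \<in> ?ZE" using f by (auto simp: formal_sums_def)
        have "b * e = e * b" using ZEc[OF p(3) b] by simp
        then show "of_int (Poly_Mapping.lookup f p) * (mm \<circ> (\<lambda>b c (e, a). (e, b * a * c)) b c) p
             = b * (of_int (Poly_Mapping.lookup f p) * mm p) * c"
          using term_right by (simp add: p(1))
      qed simp
    qed
  qed
  show ?thesis using first second unfolding L R by blast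
qed

end
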